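(* In the two-source model, let $t\in\mathbb N$ and let $(U_t,X_t,Q_t)$ be any joint distribution (with the given marginal of $(U_t,X_t)$) such that $X_t\in Q_t$ almost surely and $Q_t$ is independent of $U_t$. Then $$\mathbb E|Q_t|\;\ge\;2-\pi_t(A)-\pi_t(B).$$ Consequently, any scheme satisfying decodability and the privacy constraint $I(X_{\mathcal B_t};Q_0,\dots,Q_t)=0$ has $1/R_t\ge 2-\pi_t(A)-\pi_t(B)$.
   Context: Requests $X_t\in\{A,B\}$, $t\ge0$, form a Markov chain with transition matrix $M$; privacy modes $F_t$ are a known sequence with $F_0=\mathrm{ON}$. Queries take values in $\{\{A\},\{B\},\{A,B\}\}$ with download cost $|Q_t|L$, and the rate satisfies $R_t\le L/(L\,\mathbb E|Q_t|)$. $\mathcal B_t=\{i\le t: F_i=\mathrm{ON}\}\cup\{i: i\ge t+1\}$, $F^-(t)=\max\{i\le t: F_i=\mathrm{ON}\}$, $U_t=(X_{F^-(t)},X_{t+1})$ (note $F^-(t),t+1\in\mathcal B_t$), $p(x\mid u)=P(X_t=x\mid U_t=u)$, and $\pi_t(x)=\min_u p(x\mid u)$ over $u\in\{A,B\}^2$ with $P(U_t=u)>0$. *)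

theory Defs
  imports "HOL-Probability.Probability"
begin

datatype req = A | B

text \<open>Privacy modes: F i = True means ON.\<close>

definition Fminus :: "(nat \<Rightarrow> bool) \<Rightarrow> nat \<Rightarrow> nat" where
  "Fminus F t = (GREATEST i. i \<le> t \<and> F i)"

definition Bset :: "(nat \<Rightarrow> bool) \<Rightarrow> nat \<Rightarrow> nat set" where
  "Bset F t = {i. i \<le> t \<and> F i} \<union> {i. t + 1 \<le> i}"

definition Ut :: "(nat \<Rightarrow> bool) \<Rightarrow> (nat \<Rightarrow> 'w \<Rightarrow> req) \<Rightarrow> nat \<Rightarrow> 'w \<Rightarrow> req \<times> req" where
  "Ut F X t = (\<lambda>w. (X (Fminus F t) w, X (Suc t) w))"

definition markov_chain :: "'w measure \<Rightarrow> (nat \<Rightarrow> 'w \<Rightarrow> req) \<Rightarrow> (req \<Rightarrow> req \<Rightarrow> real) \<Rightarrow> bool" where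
  "markov_chain M X T \<longleftrightarrow>
     (\<forall>n (xs::req list) y. length xs = Suc n \<longrightarrow>
        measure M {w \<in> space M. (\<forall>i\<le>n. X i w = xs ! i) \<and> X (Suc n) w = y}
        = measure M {w \<in> space M. \<forall>i\<le>n. X i w = xs ! i} * T (xs ! n) y)"

definition stochastic_matrix :: "(req \<Rightarrow> req \<Rightarrow> real) \<Rightarrow> bool" where
  "stochastic_matrix T \<longleftrightarrow> (\<forall>x y. 0 \<le> T x y) \<and> (\<forall>x. T x A + T x B = 1)"

definition cond_p :: "'w measure \<Rightarrow> (nat \<Rightarrow> bool) \<Rightarrow> (nat \<Rightarrow> 'w \<Rightarrow> req) \<Rightarrow> nat \<Rightarrow> req \<Rightarrow> req \<times> req \<Rightarrow> real" where
  "cond_p M F X t x u =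
     measure M {w \<in> space M. X t w = x \<and> Ut F X t w = u} / measure M {w \<in> space M. Ut F X t w = u}"

definition pi_t :: "'w measure \<Rightarrow> (nat \<Rightarrow> bool) \<Rightarrow> (nat \<Rightarrow> 'w \<Rightarrow> req) \<Rightarrow> nat \<Rightarrow> req \<Rightarrow> real" where
  "pi_t M F X t x =
     Min {cond_p M F X t x u | u. 0 < measure M {w \<in> space M. Ut F X t w = u}}"

text \<open>Independence of two random variables with (possibly) different value spaces
  (the library's indep_var requires equal value types).\<close>
definition indep_rv :: "'w measure \<Rightarrow> 'a measure \<Rightarrow> ('w \<Rightarrow> 'a) \<Rightarrow> 'b measure \<Rightarrow> ('w \<Rightarrow> 'b) \<Rightarrow> bool" where
  "indep_rv M Ma X Mb Y \<longleftrightarrow>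
     (\<forall>S\<in>sets Ma. \<forall>S'\<in>sets Mb.
        measure M (X -` S \<inter> Y -` S' \<inter> space M)
        = measure M (X -` S \<inter> space M) * measure M (Y -` S' \<inter> space M))"

definition valid_query :: "req set \<Rightarrow> bool" where
  "valid_query q \<longleftrightarrow> q \<in> {{A}, {B}, {A, B}}"

end

theory Submission imports Defs begin

lemma UNIV_req: "(UNIV :: req set) = {A, B}" using req.exhaust by auto
lemma UNIV_req2: "(UNIV :: (req\<times>req) set) = {(A,A),(A,B),(B,A),(B,B)}"
  using req.exhaust by auto

lemma Ut_set:
  assumes "\<And>i. X i \<in> measurable M (count_space UNIV)"
  shows "Ut F X t -` {u} \<inter> space M \<in> sets M"
proof -
  have "Ut F X t -` {u} \<inter> space M = (X (Fminus F t) -` {fst u} \<inter> space M) \<inter> (X (Suc t) -` {snd u} \<inter> space M)"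
    by (cases u) (auto simp: Ut_def)
  also have "\<dots> \<in> sets M" using assms by (intro sets.Int measurable_sets) auto
  finally show ?thesis .
qed

lemma core:
  fixes M :: "'w measure" and Q :: "'w \<Rightarrow> req set"
  assumes P: "prob_space M"
    and Xm: "\<And>i. X i \<in> measurable M (count_space UNIV)"
    and Qm: "Q \<in> measurable M (count_space UNIV)"
    and V: "\<forall>w \<in> space M. valid_query (Q w)"
    and AEQ: "AE w in M. X t w \<in> Q w"
    and ind: "\<And>u S. measure M (Ut F X t -` {u} \<inter> Q -` {S} \<inter> space M)
         = measure M (Ut F X t -` {u} \<inter> space M) * measure M (Q -` {S} \<inter> space M)"
  shows "prob_space.expectation M (\<lambda>w. real (card (Q w))) \<ge> 2 - pi_t M F X t A - pi_t M F X t B"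
proof -
  interpret prob_space M by fact
  define qA where "qA = measure M (Q -` {{A}} \<inter> space M)"
  define qB where "qB = measure M (Q -` {{B}} \<inter> space M)"
  have QAs: "Q -` {S} \<inter> space M \<in> sets M" for S using Qm by (intro measurable_sets) auto
  have E: "expectation (\<lambda>w. real (card (Q w))) = 2 - qA - qB"
  proof -
    have "expectation (\<lambda>w. real (card (Q w))) =
       expectation (\<lambda>w. 2 - indicator (Q -` {{A}} \<inter> space M) w - indicator (Q -` {{B}} \<inter> space M) w)"
      by (rule Bochner_Integration.integral_cong[OF refl])
        (use V in \<open>auto simp: valid_query_def indicator_def\<close>)
    also have "\<dots> = 2 - qA - qB"
    proof -
      have iA: "integrable M (indicator (Q -` {{A}} \<inter> space M) :: 'w \<Rightarrow> real)"
        using QAs[of "{A}"] by (intro integrable_real_indicator) (auto simp: emeasure_eq_measure)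
      have iB: "integrable M (indicator (Q -` {{B}} \<inter> space M) :: 'w \<Rightarrow> real)"
        using QAs[of "{B}"] by (intro integrable_real_indicator) (auto simp: emeasure_eq_measure)
      have "expectation (\<lambda>w. 2 - indicator (Q -` {{A}} \<inter> space M) w - indicator (Q -` {{B}} \<inter> space M) w)
          = expectation (\<lambda>w. 2 - indicator (Q -` {{A}} \<inter> space M) w) - expectation (indicator (Q -` {{B}} \<inter> space M) :: 'w \<Rightarrow> real)"
        using iA iB by (intro Bochner_Integration.integral_diff Bochner_Integration.integrable_diff integrable_const) auto
      also have "expectation (\<lambda>w. 2 - indicator (Q -` {{A}} \<inter> space M) w) = expectation (\<lambda>w. 2::real) - expectation (indicator (Q -` {{A}} \<inter> space M))"
        using iA by (intro Bochner_Integration.integral_diff) auto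
      finally show ?thesis using QAs[of "{A}"] QAs[of "{B}"]
        by (simp add: qA_def qB_def prob_space Int_absorb2)
    qed
    finally show ?thesis .
  qed
  have key: "qA \<le> pi_t M F X t A \<and> qB \<le> pi_t M F X t B"
  proof -
    let ?U = "\<lambda>u. Ut F X t -` {u} \<inter> space M"
    have Us: "?U u \<in> sets M" for u using Ut_set[OF Xm] .
    have fin: "finite {cond_p M F X t x u | u. 0 < measure M {w \<in> space M. Ut F X t w = u}}" for x
    proof -
      have "{cond_p M F X t x u | u. 0 < measure M {w \<in> space M. Ut F X t w = u}} \<subseteq> (\<lambda>u. cond_p M F X t x u) ` UNIV" by auto
      moreover have "finite (UNIV :: (req\<times>req) set)" by (simp add: UNIV_req2)
      ultimately show ?thesis by (meson finite_imageI finite_subset)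
    qed
    have ne: "\<exists>u. 0 < measure M {w \<in> space M. Ut F X t w = u}"
    proof (rule ccontr)
      assume "\<not> ?thesis"
      then have z: "measure M (?U u) = 0" for u
      proof -
        have "{w \<in> space M. Ut F X t w = u} = ?U u" by auto
        then show ?thesis using \<open>\<not> _\<close> measure_nonneg[of M "?U u"] by (metis not_less order.antisym)
      qed
      have "space M = ?U (A,A) \<union> ?U (A,B) \<union> ?U (B,A) \<union> ?U (B,B)"
        using UNIV_req2 by auto
      then have "measure M (space M) \<le> measure M (?U (A,A)) + measure M (?U (A,B)) + measure M (?U (B,A)) + measure M (?U (B,B))"
      proof -
        have "measure M (?U (A,A) \<union> ?U (A,B) \<union> ?U (B,A) \<union> ?U (B,B)) \<le> measure M (?U (A,A) \<union> ?U (A,B) \<union> ?U (B,A)) + measure M (?U (B,B))"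
          using Us by (intro measure_Un_le sets.Un) auto
        also have "measure M (?U (A,A) \<union> ?U (A,B) \<union> ?U (B,A)) \<le> measure M (?U (A,A) \<union> ?U (A,B)) + measure M (?U (B,A))"
          using Us by (intro measure_Un_le sets.Un) auto
        also have "measure M (?U (A,A) \<union> ?U (A,B)) \<le> measure M (?U (A,A)) + measure M (?U (A,B))"
          using Us by (intro measure_Un_le sets.Un) auto
        finally show ?thesis using \<open>space M = _\<close> by simp
      qed
      then show False using z prob_space by simp
    qed
    have bound: "measure M (Q -` {{x}} \<inter> space M) \<le> cond_p M F X t x u"
      if pos: "0 < measure M {w \<in> space M. Ut F X t w = u}" for x u
    proof -
      have eqU: "{w \<in> space M. Ut F X t w = u} = ?U u" by auto
      have "measure M (Q -` {{x}} \<inter> space M) * measure M (?U u) = measure M (Ut F X t -` {u} \<inter> Q -` {{x}} \<inter> space M)"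
        using ind[of u "{x}"] by (simp add: mult.commute)
      also have "\<dots> \<le> measure M {w \<in> space M. X t w = x \<and> Ut F X t w = u}"
      proof (rule finite_measure_mono_AE)
        show "AE w in M. w \<in> Ut F X t -` {u} \<inter> Q -` {{x}} \<inter> space M \<longrightarrow> w \<in> {w \<in> space M. X t w = x \<and> Ut F X t w = u}"
          using AEQ by eventually_elim auto
        have "{w \<in> space M. X t w = x \<and> Ut F X t w = u} = (X t -` {x} \<inter> space M) \<inter> ?U u" by auto
        then show "{w \<in> space M. X t w = x \<and> Ut F X t w = u} \<in> sets M"
          using Us[of u] Xm[of t] by (metis measurable_sets sets.Int sets_count_space UNIV_I Pow_UNIV)
      qed
      finally show ?thesis using pos eqU unfolding cond_p_def by (simp add: pos_le_divide_eq)
    qed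
    show ?thesis unfolding pi_t_def qA_def qB_def
      using fin ne bound by (auto intro!: Min.boundedI)
  qed
  show ?thesis using E key by simp
qed

lemma Fminus_mem: assumes "F 0" shows "Fminus F t \<in> Bset F t"
proof -
  have "Fminus F t \<le> t \<and> F (Fminus F t)"
    unfolding Fminus_def by (rule GreatestI_nat[where k=0 and b=t]) (use assms in auto)
  then show ?thesis unfolding Bset_def by auto
qed

theorem mainTheorem4:
  fixes M :: "'w measure" and X :: "nat \<Rightarrow> 'w \<Rightarrow> req" and T :: "req \<Rightarrow> req \<Rightarrow> real"
    and F :: "nat \<Rightarrow> bool" and t :: nat
  assumes "prob_space M"
    and "\<And>i. X i \<in> measurable M (count_space UNIV)"
    and "stochastic_matrix T"
    and "markov_chain M X T"
    and "F 0"
  shows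
   "(\<forall>Qt :: 'w \<Rightarrow> req set.
        Qt \<in> measurable M (count_space UNIV)
      \<and> (\<forall>w \<in> space M. valid_query (Qt w))
      \<and> (AE w in M. X t w \<in> Qt w)
      \<and> indep_rv M (count_space UNIV) (Ut F X t) (count_space UNIV) Qt
      \<longrightarrow> prob_space.expectation M (\<lambda>w. real (card (Qt w)))
            \<ge> 2 - pi_t M F X t A - pi_t M F X t B)
  \<and> (\<forall>(Q :: nat \<Rightarrow> 'w \<Rightarrow> req set) (L :: real) (R :: real).
        (\<forall>i. Q i \<in> measurable M (count_space UNIV))
      \<and> (\<forall>i. \<forall>w \<in> space M. valid_query (Q i w))
      \<and> (\<forall>i. AE w in M. X i w \<in> Q i w)
      \<and> indep_rv M
           (PiM (Bset F t) (\<lambda>_. count_space UNIV)) (\<lambda>w. restrict (\<lambda>i. X i w) (Bset F t))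
           (count_space UNIV) (\<lambda>w. map (\<lambda>i. Q i w) [0..<Suc t])
      \<and> 0 < L \<and> 0 < R
      \<and> R \<le> L / (L * prob_space.expectation M (\<lambda>w. real (card (Q t w))))
      \<longrightarrow> 1 / R \<ge> 2 - pi_t M F X t A - pi_t M F X t B)"
proof (intro conjI allI impI)
  fix Qt :: "'w \<Rightarrow> req set"
  assume h: "Qt \<in> measurable M (count_space UNIV)
      \<and> (\<forall>w \<in> space M. valid_query (Qt w))
      \<and> (AE w in M. X t w \<in> Qt w)
      \<and> indep_rv M (count_space UNIV) (Ut F X t) (count_space UNIV) Qt"
  show "prob_space.expectation M (\<lambda>w. real (card (Qt w))) \<ge> 2 - pi_t M F X t A - pi_t M F X t B"
    using h by (intro core[OF assms(1,2)]) (auto simp: indep_rv_def)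
next
  fix Q :: "nat \<Rightarrow> 'w \<Rightarrow> req set" and L R :: real
  assume h: "(\<forall>i. Q i \<in> measurable M (count_space UNIV))
      \<and> (\<forall>i. \<forall>w \<in> space M. valid_query (Q i w))
      \<and> (\<forall>i. AE w in M. X i w \<in> Q i w)
      \<and> indep_rv M
           (PiM (Bset F t) (\<lambda>_. count_space UNIV)) (\<lambda>w. restrict (\<lambda>i. X i w) (Bset F t))
           (count_space UNIV) (\<lambda>w. map (\<lambda>i. Q i w) [0..<Suc t])
      \<and> 0 < L \<and> 0 < R
      \<and> R \<le> L / (L * prob_space.expectation M (\<lambda>w. real (card (Q t w))))"
  define E where "E = prob_space.expectation M (\<lambda>w. real (card (Q t w)))"
  define G where "G = (\<lambda>w. restrict (\<lambda>i. X i w) (Bset F t))"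
  define H where "H = (\<lambda>w. map (\<lambda>i. Q i w) [0..<Suc t])"
  let ?P = "PiM (Bset F t) (\<lambda>_. count_space UNIV) :: (nat \<Rightarrow> req) measure"
  have a_in: "Fminus F t \<in> Bset F t" using Fminus_mem[of F t] assms(5) by blast
  have b_in: "Suc t \<in> Bset F t" by (simp add: Bset_def)
  have ind: "measure M (Ut F X t -` {u} \<inter> Q t -` {S} \<inter> space M)
         = measure M (Ut F X t -` {u} \<inter> space M) * measure M (Q t -` {S} \<inter> space M)" for u S
  proof -
    define S1 where "S1 = {f \<in> space ?P. f (Fminus F t) = fst u} \<inter> {f \<in> space ?P. f (Suc t) = snd u}"
    define S2 where "S2 = {l :: req set list. l ! t = S}"
    have S1s: "S1 \<in> sets ?P"
    proof -
      have "{f \<in> space ?P. f i = x} \<in> sets ?P" if "i \<in> Bset F t" for i and x :: req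
      proof -
        have "(\<lambda>f. f i) -` {x} \<inter> space ?P \<in> sets ?P"
          using measurable_component_singleton[OF that, of "\<lambda>_. count_space UNIV"]
          by (intro measurable_sets) auto
        moreover have "(\<lambda>f. f i) -` {x} \<inter> space ?P = {f \<in> space ?P. f i = x}" by auto
        ultimately show ?thesis by simp
      qed
      then show ?thesis unfolding S1_def using a_in b_in by auto
    qed
    have Gsp: "G w \<in> space ?P" for w by (simp add: G_def space_PiM)
    have e1: "Ut F X t -` {u} \<inter> space M = G -` S1 \<inter> space M"
      using Gsp a_in b_in by (cases u) (auto simp: Ut_def S1_def G_def)
    have e2: "Q t -` {S} \<inter> space M = H -` S2 \<inter> space M"
      by (auto simp: H_def S2_def nth_map simp del: upt_Suc)
    have e3: "Ut F X t -` {u} \<inter> Q t -` {S} \<inter> space M = G -` S1 \<inter> H -` S2 \<inter> space M"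
    proof -
      have "Ut F X t -` {u} \<inter> Q t -` {S} \<inter> space M = (Ut F X t -` {u} \<inter> space M) \<inter> (Q t -` {S} \<inter> space M)" by auto
      also have "\<dots> = (G -` S1 \<inter> space M) \<inter> (H -` S2 \<inter> space M)" by (simp only: e1 e2)
      also have "\<dots> = G -` S1 \<inter> H -` S2 \<inter> space M" by auto
      finally show ?thesis .
    qed
    from h have "indep_rv M ?P G (count_space UNIV) H" by (simp add: G_def H_def)
    then have "measure M (G -` S1 \<inter> H -` S2 \<inter> space M) = measure M (G -` S1 \<inter> space M) * measure M (H -` S2 \<inter> space M)"
    proof -
      have "S2 \<in> sets (count_space UNIV)" by simp
      then show ?thesis using \<open>indep_rv M ?P G (count_space UNIV) H\<close> S1s unfolding indep_rv_def by blast
    qed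
    then show ?thesis by (simp only: e1 e2 e3)
  qed
  have core': "E \<ge> 2 - pi_t M F X t A - pi_t M F X t B"
    unfolding E_def using h by (intro core[OF assms(1,2)] ind) auto
  have RE: "R \<le> L / (L * E)" using h unfolding E_def by blast
  have L: "0 < L" "0 < R" using h by auto
  have Epos: "0 < E"
  proof (rule ccontr)
    assume "\<not> 0 < E"
    then have "L / (L * E) \<le> 0" using L by (simp add: divide_nonneg_neg mult_pos_neg divide_le_0_iff mult_le_0_iff)
    then show False using RE L by linarith
  qed
  have "R \<le> 1 / E" using RE L by simp
  then have "E \<le> 1 / R" using Epos L by (simp add: field_simps)
  then show "1 / R \<ge> 2 - pi_t M F X t A - pi_t M F X t B" using core' by linarith
qed

end
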